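(* For $i=1,2$ let $\mathcal{C}_i$ be an $[n,k_i,d_i]_q$ linear code and $\mathcal{C}=\{(\mathbf{u},\mathbf{u}+\mathbf{v}):\mathbf{u}\in\mathcal{C}_1,\mathbf{v}\in\mathcal{C}_2\}$. Fix the Euclidean inner product (resp. the Hermitian inner product, when $q$ is an even power of a prime), with dual denoted $\perp$. Suppose that either (i) $q=2^m$ for some $m$ and $\mathcal{C}_2$ is self-orthogonal, or (ii) both $\mathcal{C}_1$ and $\mathcal{C}_2$ are self-orthogonal. Then: 1) $\mathcal{C}$ is self-orthogonal if and only if $\mathcal{C}_1\subseteq\mathcal{C}_2^{\perp}$, if and only if $\mathcal{C}_2\subseteq\mathcal{C}_1^{\perp}$; 2) $\mathcal{C}$ is LCD if and only if $2\dim(\mathcal{C}_1\cap\mathcal{C}_2^{\perp})=k_1-k_2$; 3) $\mathcal{C}$ is self-dual if and only if $\mathcal{C}_1=\mathcal{C}_2^{\perp}$, if and only if $\mathcal{C}_2=\mathcal{C}_1^{\perp}$.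
   Context: Euclidean inner product $\sum_ix_iy_i$; for $q=p^h$, $h$ even, Hermitian inner product $\sum_ix_iy_i^{\sqrt q}$. With $\perp$ the dual under the chosen inner product, $\mathcal{C}$ is self-orthogonal if $\mathcal{C}\subseteq\mathcal{C}^{\perp}$, self-dual if $\mathcal{C}=\mathcal{C}^{\perp}$, LCD if $\mathcal{C}\cap\mathcal{C}^{\perp}=\{0\}$. *)

theory Defs
  imports Complex_Main "HOL-Computational_Algebra.Primes" "HOL-Library.Function_Algebras"
begin

text \<open>Vectors of length n over a finite field 'a are functions nat => 'a vanishing from index n on.\<close>

definition fscale :: "'a::field \<Rightarrow> (nat \<Rightarrow> 'a) \<Rightarrow> (nat \<Rightarrow> 'a)" where
  "fscale c v = (\<lambda>i. c * v i)"

definition vecs :: "nat \<Rightarrow> (nat \<Rightarrow> 'a::zero) set" where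
  "vecs n = {v. \<forall>i\<ge>n. v i = 0}"

definition linear_code :: "nat \<Rightarrow> (nat \<Rightarrow> 'a::{finite,field}) set \<Rightarrow> bool" where
  "linear_code n C \<longleftrightarrow> C \<subseteq> vecs n \<and> module.subspace fscale C"

definition code_dim :: "(nat \<Rightarrow> 'a::{finite,field}) set \<Rightarrow> nat" where
  "code_dim C = vector_space.dim fscale C"

datatype inner_kind = Euclidean | Hermitian

definition admissible_kind :: "inner_kind \<Rightarrow> 'a::{finite,field} itself \<Rightarrow> bool" where
  "admissible_kind k TYPE('a) \<longleftrightarrow>
     k = Euclidean \<or> (\<exists>p h. prime (p::nat) \<and> even h \<and> card (UNIV :: 'a set) = p ^ h)"

definition sqrt_q :: "'a::finite itself \<Rightarrow> nat" where
  "sqrt_q TYPE('a) = (THE r::nat. r ^ 2 = card (UNIV :: 'a set))"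

definition ip :: "inner_kind \<Rightarrow> nat \<Rightarrow> (nat \<Rightarrow> 'a::{finite,field}) \<Rightarrow> (nat \<Rightarrow> 'a) \<Rightarrow> 'a" where
  "ip k n x y = (\<Sum>i<n. x i * (case k of Euclidean \<Rightarrow> y i
                                    | Hermitian \<Rightarrow> y i ^ sqrt_q TYPE('a)))"

definition dual :: "inner_kind \<Rightarrow> nat \<Rightarrow> (nat \<Rightarrow> 'a::{finite,field}) set \<Rightarrow> (nat \<Rightarrow> 'a) set" where
  "dual k n C = {x \<in> vecs n. \<forall>y\<in>C. ip k n x y = 0}"

definition self_orthogonal :: "inner_kind \<Rightarrow> nat \<Rightarrow> (nat \<Rightarrow> 'a::{finite,field}) set \<Rightarrow> bool" where
  "self_orthogonal k n C \<longleftrightarrow> C \<subseteq> dual k n C"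

definition self_dual :: "inner_kind \<Rightarrow> nat \<Rightarrow> (nat \<Rightarrow> 'a::{finite,field}) set \<Rightarrow> bool" where
  "self_dual k n C \<longleftrightarrow> C = dual k n C"

definition LCD :: "inner_kind \<Rightarrow> nat \<Rightarrow> (nat \<Rightarrow> 'a::{finite,field}) set \<Rightarrow> bool" where
  "LCD k n C \<longleftrightarrow> C \<inter> dual k n C = {0}"

definition uuv :: "nat \<Rightarrow> (nat \<Rightarrow> 'a::{finite,field}) set \<Rightarrow> (nat \<Rightarrow> 'a) set \<Rightarrow> (nat \<Rightarrow> 'a) set" where
  "uuv n C1 C2 = {(\<lambda>i. if i < n then u i else if i < 2 * n then u (i - n) + v (i - n) else 0)
                   | u v. u \<in> C1 \<and> v \<in> C2}"

end

theory Submission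
  imports Defs
begin

lemma of_nat_card_zero: "of_nat (card (UNIV :: 'a::{finite,field} set)) = (0::'a)"
proof -
  have "(\<Sum>x\<in>(UNIV::'a set). x) = (\<Sum>x\<in>UNIV. x + 1)"
    by (rule sum.reindex_bij_witness[where j="\<lambda>x. x - 1" and i="\<lambda>x. x + 1"]) auto
  also have "\<dots> = (\<Sum>x\<in>UNIV. x) + of_nat (card (UNIV::'a set))"
    by (simp add: sum.distrib)
  finally show ?thesis by simp
qed

lemma char_p:
  assumes "prime (p::nat)" "card (UNIV :: 'a::{finite,field} set) = p ^ h"
  shows "of_nat p = (0::'a)"
proof -
  have "(of_nat p :: 'a) ^ h = 0" using of_nat_card_zero[where 'a='a] assms(2)
    by (metis of_nat_power)
  thus ?thesis by simp
qed

lemma frob_add: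
  assumes "prime (p::nat)" "of_nat p = (0::'a::field)"
  shows "((a::'a) + b) ^ p = a ^ p + b ^ p"
proof -
  have p0: "p > 0" using assms(1) prime_gt_0_nat by blast
  have "(a + b) ^ p = (\<Sum>k\<le>p. of_nat (p choose k) * a ^ k * b ^ (p - k))"
    by (rule binomial_ring)
  also have "\<dots> = (\<Sum>k\<in>{0,p}. of_nat (p choose k) * a ^ k * b ^ (p - k))"
  proof (rule sum.mono_neutral_right)
    show "\<forall>k\<in>{..p} - {0, p}. of_nat (p choose k) * a ^ k * b ^ (p - k) = 0"
    proof
      fix k assume k: "k \<in> {..p} - {0, p}"
      then have "p dvd (p choose k)" using dvd_choose_prime[of k p] assms(1) p0 by auto
      then obtain m where "p choose k = p * m" by blast
      then show "of_nat (p choose k) * a ^ k * b ^ (p - k) = 0" using assms(2) by simp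
    qed
  qed auto
  also have "\<dots> = a ^ p + b ^ p" using p0 by simp
  finally show ?thesis .
qed

lemma frob_pow_add:
  assumes "prime (p::nat)" "of_nat p = (0::'a::field)"
  shows "((a::'a) + b) ^ (p ^ j) = a ^ (p ^ j) + b ^ (p ^ j)"
proof (induction j)
  case 0 then show ?case by simp
next
  case (Suc j)
  have "(a + b) ^ (p ^ Suc j) = ((a + b) ^ (p ^ j)) ^ p"
    by (simp only: power_Suc2 power_mult)
  also have "\<dots> = (a ^ (p ^ j)) ^ p + (b ^ (p ^ j)) ^ p" using Suc frob_add[OF assms] by simp
  also have "\<dots> = a ^ (p ^ Suc j) + b ^ (p ^ Suc j)"
    by (simp only: power_Suc2 power_mult)
  finally show ?case .
qed

lemma pow_card: "(a::'a::{finite,field}) ^ card (UNIV :: 'a set) = a"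
proof (cases "a = 0")
  case True
  have "card (UNIV :: 'a set) > 0" by (simp add: card_gt_0_iff)
  then show ?thesis using True by simp
next
  case False
  let ?U = "UNIV - {0::'a}"
  have "(\<Prod>x\<in>?U. x) = (\<Prod>x\<in>?U. a * x)"
    by (rule prod.reindex_bij_witness[where j="\<lambda>x. x / a" and i="\<lambda>x. a * x"]) (use False in auto)
  also have "\<dots> = a ^ card ?U * (\<Prod>x\<in>?U. x)" by (simp add: prod.distrib)
  finally have "a ^ card ?U = 1"
    by (metis (no_types, lifting) DiffD2 finite mult_cancel_right1 prod_zero_iff singletonI)
  moreover have "card ?U + 1 = card (UNIV :: 'a set)"
    using card_gt_0_iff[of "UNIV::'a set"] by (simp add: card_Diff_singleton)
  ultimately show ?thesis by (metis power_add power_one_right mult_1)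
qed



lemma fscale_vs: "vector_space (fscale :: 'a::field \<Rightarrow> (nat \<Rightarrow> 'a) \<Rightarrow> _)"
  by unfold_locales (auto simp: fscale_def fun_eq_iff algebra_simps)

interpretation fv: vector_space "fscale :: 'a::field \<Rightarrow> (nat \<Rightarrow> 'a) \<Rightarrow> _"
  by (rule fscale_vs)

interpretation fvp: vector_space_pair "fscale :: 'a::field \<Rightarrow> (nat \<Rightarrow> 'a) \<Rightarrow> _" "times :: 'a \<Rightarrow> 'a \<Rightarrow> 'a"
  by unfold_locales (auto simp: fscale_def fun_eq_iff algebra_simps)

lemma code_dim_eq: "code_dim C = fv.dim C" by (simp add: code_dim_def)
lemma linear_code_eq: "linear_code n C \<longleftrightarrow> C \<subseteq> vecs n \<and> fv.subspace C"
  by (simp add: linear_code_def)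

lemma sum_fun_apply: "(sum f A) x = (\<Sum>a\<in>A. f a x)"
  by (induction A rule: infinite_finite_induct) auto

definition unitv :: "nat \<Rightarrow> nat \<Rightarrow> 'a::field" where
  "unitv i = (\<lambda>j. if j = i then 1 else 0)"

definition ipc :: "('a::field \<Rightarrow> 'a) \<Rightarrow> nat \<Rightarrow> (nat \<Rightarrow> 'a) \<Rightarrow> (nat \<Rightarrow> 'a) \<Rightarrow> 'a" where
  "ipc s n x y = (\<Sum>i<n. x i * s (y i))"

definition dualc :: "('a::field \<Rightarrow> 'a) \<Rightarrow> nat \<Rightarrow> (nat \<Rightarrow> 'a) set \<Rightarrow> (nat \<Rightarrow> 'a) set" where
  "dualc s n C = {x \<in> vecs n. \<forall>y\<in>C. ipc s n x y = 0}"

lemma vecs_subspace: "fv.subspace (vecs n)"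
  unfolding fv.subspace_def vecs_def by (auto simp: fscale_def)

lemma vecs_expand: "z \<in> vecs n \<Longrightarrow> z = (\<Sum>i<n. fscale (z i) (unitv i))"
  by (auto simp: fun_eq_iff sum_fun_apply fscale_def unitv_def vecs_def if_distrib not_less
      cong: if_cong)

lemma unitv_vecs: "i < n \<Longrightarrow> unitv i \<in> vecs n"
  by (auto simp: unitv_def vecs_def)

lemma vecs_span: "(vecs n :: (nat \<Rightarrow> 'a::field) set) = fv.span (unitv ` {..<n})"
proof
  show "(vecs n :: (nat \<Rightarrow> 'a) set) \<subseteq> fv.span (unitv ` {..<n})"
  proof
    fix z :: "nat \<Rightarrow> 'a" assume "z \<in> vecs n"
    then have "z = (\<Sum>i<n. fscale (z i) (unitv i))" by (rule vecs_expand)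
    also have "\<dots> \<in> fv.span (unitv ` {..<n})"
      proof (intro fv.span_sum fv.span_scale)
      fix i assume "i \<in> {..<n}"
      then show "(unitv i :: nat \<Rightarrow> 'a) \<in> fv.span (unitv ` {..<n})" by (intro fv.span_base) auto
    qed
    finally show "z \<in> fv.span (unitv ` {..<n})" .
  qed
  show "fv.span (unitv ` {..<n}) \<subseteq> (vecs n :: (nat \<Rightarrow> 'a) set)"
    by (rule fv.span_minimal) (auto simp: vecs_subspace unitv_vecs)
qed

lemma unitv_inj: "inj (unitv :: nat \<Rightarrow> nat \<Rightarrow> 'a::field)"
  by (auto simp: inj_def unitv_def fun_eq_iff split: if_splits)

lemma unitv_indep: "fv.independent (unitv ` {..<n} :: (nat \<Rightarrow> 'a::field) set)"
proof (rule fv.independent_if_scalars_zero)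
  show "finite (unitv ` {..<n} :: (nat \<Rightarrow> 'a) set)" by simp
  fix f :: "(nat \<Rightarrow> 'a) \<Rightarrow> 'a" and x :: "nat \<Rightarrow> 'a"
  assume 0: "(\<Sum>x\<in>unitv ` {..<n}. fscale (f x) x) = 0" and x: "x \<in> unitv ` {..<n}"
  then obtain i where i: "i < n" "x = unitv i" by auto
  have "(\<Sum>x\<in>unitv ` {..<n}. fscale (f x) x) = (\<Sum>j<n. fscale (f (unitv j)) (unitv j))"
    by (subst sum.reindex) (auto intro: inj_on_subset[OF unitv_inj])
  then have "(\<Sum>j<n. fscale (f (unitv j)) (unitv j)) i = 0" using 0 by simp
  then show "f x = 0" using i
    by (simp add: sum_fun_apply fscale_def unitv_def if_distrib[where f="times _"] sum.delta cong: if_cong)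
qed

lemma dim_vecs: "fv.dim (vecs n :: (nat \<Rightarrow> 'a::field) set) = n"
proof -
  have "fv.dim (vecs n :: (nat \<Rightarrow> 'a) set) = card (unitv ` {..<n} :: (nat \<Rightarrow> 'a) set)"
  proof (rule fv.basis_card_eq_dim[symmetric])
    show "unitv ` {..<n} \<subseteq> (vecs n :: (nat \<Rightarrow> 'a) set)" using unitv_vecs by auto
    show "(vecs n :: (nat \<Rightarrow> 'a) set) \<subseteq> fv.span (unitv ` {..<n})" using vecs_span by blast
  qed (rule unitv_indep)
  also have "\<dots> = n" by (subst card_image) (auto intro: inj_on_subset[OF unitv_inj])
  finally show ?thesis .
qed

lemma indep_vecs_finite:
  assumes "fv.independent B" "B \<subseteq> (vecs n :: (nat \<Rightarrow> 'a::field) set)"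
  shows "finite B" "card B \<le> n"
proof -
  have "finite B \<and> card B \<le> card (unitv ` {..<n} :: (nat \<Rightarrow> 'a) set)"
    by (rule fv.independent_span_bound) (use assms vecs_span in auto)
  moreover have "card (unitv ` {..<n} :: (nat \<Rightarrow> 'a) set) = n"
    by (subst card_image) (auto intro: inj_on_subset[OF unitv_inj])
  ultimately show "finite B" "card B \<le> n" by auto
qed

lemma dim_zero_iff:
  assumes "fv.subspace S" "S \<subseteq> (vecs n :: (nat \<Rightarrow> 'a::field) set)"
  shows "fv.dim S = 0 \<longleftrightarrow> S = {0}"
proof
  obtain B where B: "B \<subseteq> S" "fv.independent B" "S \<subseteq> fv.span B" "card B = fv.dim S"
    using fv.basis_exists by blast
  have "finite B" using indep_vecs_finite B assms by blast
  assume "fv.dim S = 0"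
  then have "B = {}" using B \<open>finite B\<close> by simp
  then show "S = {0}" using B assms(1) fv.subspace_0 by auto
next
  assume "S = {0}"
  then have "S = fv.span {}" by simp
  then show "fv.dim S = 0" by (metis fv.dim_span fv.dim_eq_card_independent fv.independent_empty card.empty)
qed



locale sesq =
  fixes s :: "'a::field \<Rightarrow> 'a"
  assumes s_add: "s (a + b) = s a + s b"
    and s_mult: "s (a * b) = s a * s b"
    and s_inv: "s (s a) = a"
begin

lemma s0[simp]: "s 0 = 0"
  using s_add[of 0 0] by (metis add.right_neutral add_left_cancel)

lemma s1[simp]: "s 1 = 1"
  using s_mult[of 1 "s 1"] s_inv[of 1] by simp

lemma s_eq0[simp]: "s a = 0 \<longleftrightarrow> a = 0"
  by (metis s0 s_inv)

lemma s_minus: "s (- a) = - s a"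
  using s_add[of a "-a"] by (metis neg_eq_iff_add_eq_0 s0 add.right_inverse)

lemma s_diff: "s (a - b) = s a - s b"
  using s_add[of a "-b"] s_minus[of b] by (metis diff_conv_add_uminus)

lemma s_sum: "s (sum f A) = (\<Sum>a\<in>A. s (f a))"
  by (induction A rule: infinite_finite_induct) (auto simp: s_add)

lemmas s_simps = s_add s_mult s_inv s_minus s_sum

lemma ip_add_l: "ipc s n (x + x') y = ipc s n x y + ipc s n x' y"
  by (simp add: ipc_def sum.distrib distrib_right)

lemma ip_scale_l: "ipc s n (fscale c x) y = c * ipc s n x y"
  unfolding ipc_def fscale_def by (simp only: sum_distrib_left mult.assoc)

lemma ip_add_r: "ipc s n x (y + y') = ipc s n x y + ipc s n x y'"
  by (simp add: ipc_def sum.distrib distrib_left s_add)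

lemma ip_scale_r: "ipc s n x (fscale c y) = s c * ipc s n x y"
  unfolding ipc_def fscale_def by (simp only: s_mult sum_distrib_left mult.left_commute)

lemma ip_zero_l[simp]: "ipc s n 0 y = 0"
  by (simp add: ipc_def)

lemma ip_zero_r[simp]: "ipc s n x 0 = 0"
  by (simp add: ipc_def)

lemma ip_minus_l: "ipc s n (- x) y = - ipc s n x y"
  by (simp add: ipc_def sum_negf)

lemma ip_minus_r: "ipc s n x (- y) = - ipc s n x y"
  by (simp add: ipc_def sum_negf s_minus)

lemma ip_diff_l: "ipc s n (x - x') y = ipc s n x y - ipc s n x' y"
  by (simp add: ipc_def sum_subtractf left_diff_distrib)

lemma ip_diff_r: "ipc s n x (y - y') = ipc s n x y - ipc s n x y'"
  by (simp add: ipc_def sum_subtractf right_diff_distrib s_diff)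

lemma ip_sum_l: "ipc s n (sum f A) y = (\<Sum>a\<in>A. ipc s n (f a) y)"
proof (induction A rule: infinite_finite_induct)
  case (infinite A) then show ?case by (metis sum.infinite ip_zero_l)
next
  case empty then show ?case by (simp only: sum.empty ip_zero_l)
next
  case (insert a F) then show ?case by (simp only: sum.insert[OF insert(1,2)] ip_add_l insert(3))
qed

lemma ip_sum_r: "ipc s n x (sum f A) = (\<Sum>a\<in>A. ipc s n x (f a))"
proof (induction A rule: infinite_finite_induct)
  case (infinite A) then show ?case by (metis sum.infinite ip_zero_r)
next
  case empty then show ?case by (simp only: sum.empty ip_zero_r)
next
  case (insert a F) then show ?case by (simp only: sum.insert[OF insert(1,2)] ip_add_r insert(3))
qed

lemma ip_sym: "ipc s n y x = s (ipc s n x y)"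
proof -
  have "s (ipc s n x y) = (\<Sum>i<n. s (x i * s (y i)))" unfolding ipc_def by (rule s_sum)
  also have "\<dots> = (\<Sum>i<n. y i * s (x i))"
    by (rule sum.cong) (simp_all only: s_mult s_inv mult.commute)
  finally show ?thesis by (simp add: ipc_def)
qed

lemma ip_unit: "i < n \<Longrightarrow> ipc s n (unitv i) y = s (y i)"
proof -
  assume i: "i < n"
  have "ipc s n (unitv i) y = (\<Sum>j<n. if j = i then s (y j) else 0)"
    unfolding ipc_def unitv_def by (rule sum.cong) auto
  also have "\<dots> = s (y i)" using i by (simp add: sum.delta')
  finally show ?thesis .
qed

lemma nondeg:
  assumes "y \<in> vecs n" "\<And>i. i < n \<Longrightarrow> ipc s n (unitv i) y = 0"
  shows "y = 0"
proof
  fix i show "y i = 0 i"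
    using assms ip_unit[of i n y] by (cases "i < n") (auto simp: vecs_def)
qed

lemma dual_vecs: "dualc s n C \<subseteq> vecs n"
  by (auto simp: dualc_def)

lemma dual_subspace: "fv.subspace (dualc s n C)"
  using vecs_subspace[of n]
  unfolding fv.subspace_def dualc_def by (auto simp: ip_add_l ip_scale_l)

lemma orth_sym:
  assumes "A \<subseteq> vecs n" "B \<subseteq> vecs n"
  shows "A \<subseteq> dualc s n B \<longleftrightarrow> B \<subseteq> dualc s n A"
  using assms unfolding dualc_def subset_iff mem_Collect_eq by (metis ip_sym s0)

lemma dual_dual_sup: "C \<subseteq> vecs n \<Longrightarrow> C \<subseteq> dualc s n (dualc s n C)"
  using orth_sym[of "dualc s n C" n C] dual_vecs by blast

lemma represent:
  assumes "Vector_Spaces.linear fscale (times :: 'a \<Rightarrow> 'a \<Rightarrow> 'a) f"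
  shows "\<exists>y \<in> vecs n. \<forall>z \<in> vecs n. ipc s n z y = f z"
proof
  let ?y = "\<lambda>i. if i < n then s (f (unitv i)) else 0"
  show "?y \<in> vecs n" by (simp add: vecs_def)
  show "\<forall>z \<in> vecs n. ipc s n z ?y = f z"
  proof
    fix z :: "nat \<Rightarrow> 'a" assume z: "z \<in> vecs n"
    have "f z = f (\<Sum>i<n. fscale (z i) (unitv i))" using vecs_expand[OF z] by simp
    also have "\<dots> = (\<Sum>i<n. f (fscale (z i) (unitv i)))"
      by (rule fvp.linear_sum[OF assms])
    also have "\<dots> = (\<Sum>i<n. z i * f (unitv i))"
      by (simp add: fvp.linear_scale[OF assms])
    also have "\<dots> = ipc s n z ?y" by (simp add: ipc_def s_inv)
    finally show "ipc s n z ?y = f z" by simp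
  qed
qed

end


context vector_space begin

lemma dim_sums_Int_gen:
  assumes "subspace S" "subspace T"
    and fin: "\<And>X. independent X \<Longrightarrow> X \<subseteq> S \<union> T \<Longrightarrow> finite X"
  shows "dim {x + y |x y. x \<in> S \<and> y \<in> T} + dim(S \<inter> T) = dim S + dim T" (is "dim ?ST + _ = _")
proof -
  obtain B where B: "B \<subseteq> S \<inter> T" "S \<inter> T \<subseteq> span B"
             and indB: "independent B"
             and cardB: "card B = dim (S \<inter> T)"
    using basis_exists by metis
  then obtain C D where "B \<subseteq> C" "C \<subseteq> S" "independent C" "S \<subseteq> span C"
                    and "B \<subseteq> D" "D \<subseteq> T" "independent D" "T \<subseteq> span D"
    using maximal_independent_subset_extend
    by (metis Int_subset_iff \<open>B \<subseteq> S \<inter> T\<close> indB)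
  then have "finite B" "finite C" "finite D"
    using fin B indB by (meson le_supI1 le_supI2 inf.boundedE subset_trans)+
  have Beq: "B = C \<inter> D"
  proof (rule spanning_subset_independent [symmetric])
    show "independent (C \<inter> D)"
      by (meson \<open>independent C\<close> independent_mono inf.cobounded1)
  qed (use B \<open>C \<subseteq> S\<close> \<open>D \<subseteq> T\<close> \<open>B \<subseteq> C\<close> \<open>B \<subseteq> D\<close> in auto)
  then have Deq: "D = B \<union> (D - C)"
    by blast
  have CUD: "C \<union> D \<subseteq> ?ST"
  proof (simp, intro conjI)
    show "C \<subseteq> ?ST"
      using span_zero span_minimal [OF _ \<open>subspace T\<close>] \<open>C \<subseteq> S\<close> by force
    show "D \<subseteq> ?ST"
      using span_zero span_minimal [OF _ \<open>subspace S\<close>] \<open>D \<subseteq> T\<close> by force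
  qed
  have "a v = 0" if 0: "(\<Sum>v\<in>C. a v *s v) + (\<Sum>v\<in>D - C. a v *s v) = 0"
                 and v: "v \<in> C \<union> (D-C)" for a v
  proof -
    have CsS: "\<And>x. x \<in> C \<Longrightarrow> a x *s x \<in> S"
      using \<open>C \<subseteq> S\<close> \<open>subspace S\<close> subspace_scale by auto
    have eq: "(\<Sum>v\<in>D - C. a v *s v) = - (\<Sum>v\<in>C. a v *s v)"
      using that add_eq_0_iff by blast
    have "(\<Sum>v\<in>D - C. a v *s v) \<in> S"
      by (simp add: eq CsS \<open>subspace S\<close> subspace_neg subspace_sum)
    moreover have "(\<Sum>v\<in>D - C. a v *s v) \<in> T"
      apply (rule subspace_sum [OF \<open>subspace T\<close>])
      by (meson DiffD1 \<open>D \<subseteq> T\<close> \<open>subspace T\<close> subset_eq subspace_def)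
    ultimately have "(\<Sum>v \<in> D-C. a v *s v) \<in> span B"
      using B by blast
    then obtain e where e: "(\<Sum>v\<in>B. e v *s v) = (\<Sum>v \<in> D-C. a v *s v)"
      using span_finite [OF \<open>finite B\<close>] by force
    define cc where "cc x = (if x \<in> B then a x + e x else a x)" for x
    have [simp]: "C \<inter> B = B" "D \<inter> B = B" "C \<inter> - B = C-D" "B \<inter> (D - C) = {}"
      using \<open>B \<subseteq> C\<close> \<open>B \<subseteq> D\<close> Beq by blast+
    have f2: "(\<Sum>v\<in>C \<inter> D. e v *s v) = (\<Sum>v\<in>D - C. a v *s v)"
      using Beq e by presburger
    have f3: "(\<Sum>v\<in>C \<union> D. a v *s v) = (\<Sum>v\<in>C - D. a v *s v) + (\<Sum>v\<in>D - C. a v *s v) + (\<Sum>v\<in>C \<inter> D. a v *s v)"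
      using \<open>finite C\<close> \<open>finite D\<close> sum.union_diff2 by blast
    have f4: "(\<Sum>v\<in>C \<union> (D - C). a v *s v) = (\<Sum>v\<in>C. a v *s v) + (\<Sum>v\<in>D - C. a v *s v)"
      by (meson Diff_disjoint \<open>finite C\<close> \<open>finite D\<close> finite_Diff sum.union_disjoint)
    have "(\<Sum>v\<in>C. cc v *s v) = 0"
      using 0 f2 f3 f4
      apply (simp add: cc_def Beq \<open>finite C\<close> sum.If_cases algebra_simps sum.distrib
          if_distrib if_distribR)
      apply (simp add: add.commute add.left_commute diff_eq)
      done
    then have "\<And>v. v \<in> C \<Longrightarrow> cc v = 0"
      using independentD \<open>independent C\<close> \<open>finite C\<close> by blast
    then have C0: "\<And>v. v \<in> C - B \<Longrightarrow> a v = 0"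
      by (simp add: cc_def Beq) meson
    then have [simp]: "(\<Sum>x\<in>C - B. a x *s x) = 0"
      by simp
    have "(\<Sum>x\<in>C. a x *s x) = (\<Sum>x\<in>B. a x *s x)"
    proof -
      have "C - D = C - B"
        using Beq by blast
      then show ?thesis
        using Beq \<open>(\<Sum>x\<in>C - B. a x *s x) = 0\<close> f3 f4 by auto
    qed
    with 0 have Dcc0: "(\<Sum>v\<in>D. a v *s v) = 0"
      by (subst Deq) (simp add: \<open>finite B\<close> \<open>finite D\<close> sum_Un)
    then have D0: "\<And>v. v \<in> D \<Longrightarrow> a v = 0"
      using independentD \<open>independent D\<close> \<open>finite D\<close> by blast
    show ?thesis
      using v C0 D0 Beq by blast
  qed
  then have "independent (C \<union> (D - C))"
    by (intro independent_if_scalars_zero)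
       (simp_all add: \<open>finite C\<close> \<open>finite D\<close> sum_Un del: Un_Diff_cancel)
  then have indCUD: "independent (C \<union> D)" by simp
  have "dim (S \<inter> T) = card B"
    by (rule dim_unique [OF B indB refl])
  moreover have "dim S = card C"
    by (metis \<open>C \<subseteq> S\<close> \<open>independent C\<close> \<open>S \<subseteq> span C\<close> basis_card_eq_dim)
  moreover have "dim T = card D"
    by (metis \<open>D \<subseteq> T\<close> \<open>independent D\<close> \<open>T \<subseteq> span D\<close> basis_card_eq_dim)
  moreover have "dim ?ST = card(C \<union> D)"
  proof -
    have *: "\<And>x y. \<lbrakk>x \<in> S; y \<in> T\<rbrakk> \<Longrightarrow> x + y \<in> span (C \<union> D)"
      by (meson \<open>S \<subseteq> span C\<close> \<open>T \<subseteq> span D\<close> span_add span_mono subsetCE sup.cobounded1 sup.cobounded2)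
    show ?thesis
      by (auto intro: * dim_unique [OF CUD _ indCUD refl])
  qed
  ultimately show ?thesis
    using \<open>B = C \<inter> D\<close> [symmetric]
    by (simp add: \<open>finite C\<close> \<open>finite D\<close> card_Un_Int)
qed

end

lemma sum_delta1: "finite A \<Longrightarrow> a \<in> A \<Longrightarrow> (\<Sum>b\<in>A. g b * (if b = a then 1 else 0)) = (g a :: 'a::comm_ring_1)"
  by (simp add: if_distrib[where f="times (g _)"] sum.delta' cong: if_cong)

lemma sum_delta2: "finite A \<Longrightarrow> a \<in> A \<Longrightarrow> (\<Sum>b\<in>A. g b * (if a = b then 1 else 0)) = (g a :: 'a::comm_ring_1)"
  by (simp add: if_distrib[where f="times (g _)"] sum.delta cong: if_cong)



context sesq begin

definition dbasis :: "nat \<Rightarrow> (nat \<Rightarrow> 'a) set \<Rightarrow> ((nat \<Rightarrow> 'a) \<Rightarrow> (nat \<Rightarrow> 'a)) \<Rightarrow> bool" where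
  "dbasis n B' y \<longleftrightarrow> finite B' \<and> B' \<subseteq> vecs n \<and> fv.independent B' \<and> vecs n \<subseteq> fv.span B'
     \<and> (\<forall>b\<in>B'. y b \<in> vecs n) \<and> (\<forall>b\<in>B'. \<forall>b'\<in>B'. ipc s n b' (y b) = (if b' = b then 1 else 0))"

lemma dual_basis:
  assumes "fv.subspace C" "C \<subseteq> vecs n"
  obtains B B' y where "B \<subseteq> C" "fv.independent B" "C \<subseteq> fv.span B" "card B = fv.dim C"
    "B \<subseteq> B'" "dbasis n B' y" "card B' = n"
proof -
  obtain B where B: "B \<subseteq> C" "fv.independent B" "C \<subseteq> fv.span B" "card B = fv.dim C"
    using fv.basis_exists by blast
  have "B \<subseteq> vecs n" using B assms by auto
  then obtain B' where B': "B \<subseteq> B'" "B' \<subseteq> vecs n" "fv.independent B'" "vecs n \<subseteq> fv.span B'"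
    using fv.maximal_independent_subset_extend[of B "vecs n"] B(2) by blast
  have fin: "finite B'" using indep_vecs_finite B' by blast
  have card: "card B' = n" using fv.basis_card_eq_dim[OF B'(2) B'(4) B'(3)] dim_vecs by simp
  define f where "f b = fvp.construct B' (\<lambda>x. if x = b then (1::'a) else 0)" for b
  have lin: "Vector_Spaces.linear fscale times (f b)" for b
    unfolding f_def using fvp.linear_construct B'(3) by blast
  have fval: "b' \<in> B' \<Longrightarrow> f b b' = (if b' = b then 1 else 0)" for b b'
    unfolding f_def using fvp.construct_basis[OF B'(3)] by simp
  define y where "y b = (SOME w. w \<in> vecs n \<and> (\<forall>z\<in>vecs n. ipc s n z w = f b z))" for b
  have y: "y b \<in> vecs n \<and> (\<forall>z\<in>vecs n. ipc s n z (y b) = f b z)" for b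
  proof -
    have "\<exists>w. w \<in> vecs n \<and> (\<forall>z\<in>vecs n. ipc s n z w = f b z)"
      using represent[OF lin[of b], of n] by blast
    then show ?thesis unfolding y_def by (rule someI_ex)
  qed
  have "dbasis n B' y"
    unfolding dbasis_def using fin B' y fval by (auto simp: subset_iff)
  then show thesis using that B B' card by blast
qed

lemma DB1:
  assumes "dbasis n B' y" "z \<in> vecs n"
  shows "z = (\<Sum>b\<in>B'. fscale (ipc s n z (y b)) b)"
proof -
  have fin: "finite B'" and sp: "vecs n \<subseteq> fv.span B'"
    and d: "\<And>b b'. b \<in> B' \<Longrightarrow> b' \<in> B' \<Longrightarrow> ipc s n b' (y b) = (if b' = b then 1 else 0)"
    using assms(1) unfolding dbasis_def by auto
  obtain u where u: "z = (\<Sum>b\<in>B'. fscale (u b) b)"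
    using sp assms(2) fv.span_finite[OF fin] by auto
  have "ipc s n z (y b0) = u b0" if "b0 \<in> B'" for b0
  proof -
    have "ipc s n z (y b0) = (\<Sum>b\<in>B'. u b * ipc s n b (y b0))"
      unfolding u ip_sum_l ip_scale_l ..
    also have "\<dots> = (\<Sum>b\<in>B'. u b * (if b = b0 then 1 else 0))"
      using d that by (intro sum.cong) auto
    also have "\<dots> = u b0" using sum_delta1[OF fin that] .
    finally show ?thesis .
  qed
  then have "(\<Sum>b\<in>B'. fscale (ipc s n z (y b)) b) = (\<Sum>b\<in>B'. fscale (u b) b)"
    by (intro sum.cong) auto
  then show ?thesis using u by simp
qed

lemma DB2:
  assumes "dbasis n B' y" "w \<in> vecs n"
  shows "w = (\<Sum>b\<in>B'. fscale (s (ipc s n b w)) (y b))"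
proof -
  have fin: "finite B'" and sub: "B' \<subseteq> vecs n" and yv: "\<And>b. b \<in> B' \<Longrightarrow> y b \<in> vecs n"
    and d: "\<And>b b'. b \<in> B' \<Longrightarrow> b' \<in> B' \<Longrightarrow> ipc s n b' (y b) = (if b' = b then 1 else 0)"
    using assms(1) unfolding dbasis_def by auto
  let ?r = "(\<Sum>b\<in>B'. fscale (s (ipc s n b w)) (y b))"
  define dd where "dd = w - ?r"
  have rv: "?r \<in> vecs n"
    using vecs_subspace yv by (intro fv.subspace_sum) (auto intro: fv.subspace_scale)
  have ddv: "dd \<in> vecs n" unfolding dd_def using fv.subspace_diff[OF vecs_subspace assms(2) rv] .
  have z0: "ipc s n b0 dd = 0" if "b0 \<in> B'" for b0
  proof -
    have "ipc s n b0 ?r = (\<Sum>b\<in>B'. s (s (ipc s n b w)) * ipc s n b0 (y b))"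
      unfolding ip_sum_r ip_scale_r ..
    also have "\<dots> = (\<Sum>b\<in>B'. ipc s n b w * (if b0 = b then 1 else 0))"
      using d that by (intro sum.cong) (auto simp: s_inv)
    also have "\<dots> = ipc s n b0 w" using sum_delta2[OF fin that] .
    finally show ?thesis unfolding dd_def ip_diff_r by simp
  qed
  have "dd = 0"
  proof (rule nondeg[OF ddv])
    fix i assume i: "i < n"
    have "unitv i = (\<Sum>b\<in>B'. fscale (ipc s n (unitv i) (y b)) b)"
      using DB1[OF assms(1) unitv_vecs[OF i]] .
    then have "ipc s n (unitv i) dd = (\<Sum>b\<in>B'. ipc s n (unitv i) (y b) * ipc s n b dd)"
      by (metis (no_types, lifting) ip_sum_l ip_scale_l sum.cong)
    also have "\<dots> = 0" using z0 by simp
    finally show "ipc s n (unitv i) dd = 0" .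
  qed
  then show ?thesis unfolding dd_def by simp
qed

end


context sesq begin

lemma dual_main:
  assumes C: "fv.subspace C" "C \<subseteq> vecs n"
  shows "fv.dim (dualc s n C) + fv.dim C = n" and "dualc s n (dualc s n C) = C"
proof -
  obtain B B' y where B: "B \<subseteq> C" "fv.independent B" "C \<subseteq> fv.span B" "card B = fv.dim C"
    and BB': "B \<subseteq> B'" and db: "dbasis n B' y" and cB': "card B' = n"
    using dual_basis[OF C] by blast
  have fin: "finite B'" and sub: "B' \<subseteq> vecs n" and yv: "\<And>b. b \<in> B' \<Longrightarrow> y b \<in> vecs n"
    and d: "\<And>b b'. b \<in> B' \<Longrightarrow> b' \<in> B' \<Longrightarrow> ipc s n b' (y b) = (if b' = b then 1 else 0)"
    using db unfolding dbasis_def by auto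
  have finB: "finite B" using fin BB' finite_subset by blast
  define R where "R = B' - B"
  have spanB: "fv.span B = C" using fv.span_subspace[OF B(1) B(3) C(1)] .
  have yR: "y r \<in> dualc s n C" if r: "r \<in> R" for r
  proof -
    have "ipc s n (y r) c = 0" if c: "c \<in> C" for c
    proof -
      obtain u where u: "c = (\<Sum>b\<in>B. fscale (u b) b)"
        using c B(3) fv.span_finite[OF finB] by auto
      have "ipc s n c (y r) = (\<Sum>b\<in>B. u b * ipc s n b (y r))"
        unfolding u ip_sum_l ip_scale_l ..
      also have "\<dots> = 0"
      proof (intro sum.neutral ballI)
        fix b assume b: "b \<in> B"
        then have "b \<in> B'" "b \<noteq> r" using BB' r unfolding R_def by auto
        then show "u b * ipc s n b (y r) = 0" using d[of r b] r unfolding R_def by simp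
      qed
      finally show ?thesis using ip_sym[of n "y r" c] by simp
    qed
    then show ?thesis using yv r unfolding R_def dualc_def by auto
  qed
  have dsub: "dualc s n C \<subseteq> fv.span (y ` R)"
  proof
    fix w assume w: "w \<in> dualc s n C"
    then have wv: "w \<in> vecs n" by (simp add: dualc_def)
    have z: "s (ipc s n b w) = 0" if "b \<in> B" for b
      using w that B(1) ip_sym[of n b w] by (auto simp: dualc_def)
    have "w = (\<Sum>b\<in>B'. fscale (s (ipc s n b w)) (y b))" using DB2[OF db wv] .
    also have "\<dots> = (\<Sum>b\<in>R. fscale (s (ipc s n b w)) (y b))"
      using z fin unfolding R_def by (intro sum.mono_neutral_right) (auto simp: fscale_def fun_eq_iff)
    also have "\<dots> \<in> fv.span (y ` R)"
      by (intro fv.span_sum fv.span_scale fv.span_base) auto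
    finally show "w \<in> fv.span (y ` R)" .
  qed
  have spanY: "fv.span (y ` R) = dualc s n C"
    using fv.span_subspace[OF _ dsub dual_subspace] yR by blast
  have injy: "inj_on y B'"
  proof
    fix b1 b2 assume b: "b1 \<in> B'" "b2 \<in> B'" "y b1 = y b2"
    then have "ipc s n b1 (y b2) = 1" using d[of b1 b1] by simp
    then show "b1 = b2" using d[of b2 b1] b by (auto split: if_splits)
  qed
  have finR: "finite R" using fin unfolding R_def by simp
  have indY: "fv.independent (y ` R)"
  proof (rule fv.independent_if_scalars_zero)
    show "finite (y ` R)" using finR by simp
    fix g x assume 0: "(\<Sum>x\<in>y ` R. fscale (g x) x) = 0" and x: "x \<in> y ` R"
    then obtain r0 where r0: "r0 \<in> R" "x = y r0" by auto
    have injR: "inj_on y R" using injy unfolding R_def by (rule inj_on_subset) auto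
    have "(\<Sum>r\<in>R. fscale (g (y r)) (y r)) = 0" using 0 by (simp add: sum.reindex[OF injR])
    then have "0 = ipc s n r0 (\<Sum>r\<in>R. fscale (g (y r)) (y r))" by simp
    also have "\<dots> = (\<Sum>r\<in>R. s (g (y r)) * ipc s n r0 (y r))"
      unfolding ip_sum_r ip_scale_r ..
    also have "\<dots> = (\<Sum>r\<in>R. s (g (y r)) * (if r0 = r then 1 else 0))"
      using d r0 unfolding R_def by (intro sum.cong) auto
    also have "\<dots> = s (g (y r0))" using sum_delta2[OF finR r0(1)] .
    finally show "g x = 0" using r0 by simp
  qed
  have "fv.dim (dualc s n C) = card (y ` R)"
    using spanY fv.dim_span fv.dim_eq_card_independent[OF indY] by metis
  also have "\<dots> = card R" using injy unfolding R_def by (intro card_image) (rule inj_on_subset, auto)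
  also have "\<dots> = n - card B" unfolding R_def using cB' BB' finB by (simp add: card_Diff_subset)
  finally show "fv.dim (dualc s n C) + fv.dim C = n"
    using B(4) card_mono[OF fin BB'] cB' by simp
  show "dualc s n (dualc s n C) = C"
  proof
    show "C \<subseteq> dualc s n (dualc s n C)" using dual_dual_sup[OF C(2)] .
    show "dualc s n (dualc s n C) \<subseteq> C"
    proof
      fix x assume x: "x \<in> dualc s n (dualc s n C)"
      then have xv: "x \<in> vecs n" and xo: "\<And>w. w \<in> dualc s n C \<Longrightarrow> ipc s n x w = 0"
        by (auto simp: dualc_def)
      have "x = (\<Sum>b\<in>B'. fscale (ipc s n x (y b)) b)" using DB1[OF db xv] .
      also have "\<dots> = (\<Sum>b\<in>B. fscale (ipc s n x (y b)) b)"
        using xo yR fin BB' unfolding R_def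
        by (intro sum.mono_neutral_right) (auto simp: fscale_def fun_eq_iff)
      also have "\<dots> \<in> fv.span B"
        by (intro fv.span_sum fv.span_scale fv.span_base) auto
      finally show "x \<in> C" using spanB by simp
    qed
  qed
qed

lemma dual_sums:
  assumes "0 \<in> A" "0 \<in> B"
  shows "dualc s n {x + y |x y. x \<in> A \<and> y \<in> B} = dualc s n A \<inter> dualc s n B"
  using assms unfolding dualc_def
  by (auto simp: ip_add_r) (metis add.right_neutral, metis add.left_neutral)

lemma dim_le_n:
  fixes S :: "(nat \<Rightarrow> 'a) set"
  assumes "fv.subspace S" "S \<subseteq> vecs n"
  shows "fv.dim S \<le> n"
  using dual_main(1)[OF assms] by simp

lemma sub_vecs_indep_finite:
  assumes "S \<subseteq> vecs n" "T \<subseteq> vecs n" "fv.independent X" "X \<subseteq> S \<union> T"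
  shows "finite X"
  using indep_vecs_finite[of X n] assms by blast

lemma key_dim:
  assumes C1: "fv.subspace C1" "C1 \<subseteq> vecs n" and C2: "fv.subspace C2" "C2 \<subseteq> vecs n"
  shows "int (fv.dim (C1 \<inter> dualc s n C2)) - int (fv.dim (C2 \<inter> dualc s n C1))
         = int (fv.dim C1) - int (fv.dim C2)"
proof -
  let ?D2 = "dualc s n C2"
  let ?S = "{x + y |x y. x \<in> C1 \<and> y \<in> ?D2}"
  have D2: "fv.subspace ?D2" "?D2 \<subseteq> vecs n" by (rule dual_subspace, rule dual_vecs)
  have e1: "fv.dim ?S + fv.dim (C1 \<inter> ?D2) = fv.dim C1 + fv.dim ?D2"
    by (rule fv.dim_sums_Int_gen[OF C1(1) D2(1)]) (use sub_vecs_indep_finite C1(2) D2(2) in blast)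
  have e2: "fv.dim ?D2 + fv.dim C2 = n" by (rule dual_main(1)[OF C2])
  have Ssub: "fv.subspace ?S" by (rule fv.subspace_sums[OF C1(1) D2(1)])
  have Svecs: "?S \<subseteq> vecs n"
    using C1(2) D2(2) fv.subspace_add[OF vecs_subspace] by blast
  have e3: "fv.dim (dualc s n ?S) + fv.dim ?S = n" by (rule dual_main(1)[OF Ssub Svecs])
  have "dualc s n ?S = dualc s n C1 \<inter> dualc s n ?D2"
    by (rule dual_sums) (use fv.subspace_0 C1(1) D2(1) in auto)
  also have "\<dots> = dualc s n C1 \<inter> C2" using dual_main(2)[OF C2] by simp
  finally have "dualc s n ?S = C2 \<inter> dualc s n C1" by blast
  then have e4: "fv.dim (C2 \<inter> dualc s n C1) + fv.dim ?S = n" using e3 by simp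
  from e1 e2 e4 show ?thesis by linarith
qed

end


definition conjk :: "inner_kind \<Rightarrow> 'a::{finite,field} \<Rightarrow> 'a" where
  "conjk k = (case k of Euclidean \<Rightarrow> (\<lambda>a. a) | Hermitian \<Rightarrow> (\<lambda>a. a ^ sqrt_q TYPE('a)))"

lemma ip_eq: "ip k n = ipc (conjk k) n"
  by (cases k) (simp_all add: ip_def ipc_def conjk_def fun_eq_iff)

lemma dual_eq: "dual k n = dualc (conjk k) n"
  by (simp add: dual_def dualc_def ip_eq fun_eq_iff)

lemma sqrt_q_eq:
  assumes "card (UNIV :: 'a::finite set) = r ^ 2"
  shows "sqrt_q TYPE('a) = r"
  unfolding sqrt_q_def
proof (rule the_equality)
  show "r ^ 2 = card (UNIV :: 'a set)" using assms by simp
  fix x :: nat assume "x ^ 2 = card (UNIV :: 'a set)"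
  then have "x ^ Suc 1 = r ^ Suc 1" using assms by simp
  then show "x = r" by (rule power_inject_base) auto
qed

lemma sesq_conjk:
  assumes "admissible_kind k TYPE('a::{finite,field})"
  shows "sesq (conjk k :: 'a \<Rightarrow> 'a)"
proof (cases k)
  case Euclidean
  then show ?thesis by unfold_locales (simp_all add: conjk_def)
next
  case Hermitian
  then obtain p h where ph: "prime (p::nat)" "even h" "card (UNIV :: 'a set) = p ^ h"
    using assms unfolding admissible_kind_def by auto
  define r where "r = p ^ (h div 2)"
  have rr: "card (UNIV :: 'a set) = r ^ 2"
    using ph unfolding r_def by (simp add: power_mult[symmetric])
  have sq: "sqrt_q TYPE('a) = r" by (rule sqrt_q_eq[OF rr])
  have c: "of_nat p = (0::'a)" by (rule char_p[OF ph(1) ph(3)])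
  show ?thesis
  proof
    fix a b :: 'a
    show "conjk k (a + b) = conjk k a + conjk k b"
      using frob_pow_add[OF ph(1) c] by (simp add: conjk_def Hermitian sq r_def)
    show "conjk k (a * b) = conjk k a * conjk k b"
      by (simp add: conjk_def Hermitian power_mult_distrib)
    have "(a ^ r) ^ r = a ^ (r ^ 2)" by (simp add: power_mult[symmetric] power2_eq_square)
    also have "\<dots> = a" using pow_card[of a] rr by simp
    finally show "conjk k (conjk k a) = a" by (simp add: conjk_def Hermitian sq)
  qed
qed

lemma char2:
  assumes "card (UNIV :: 'a::{finite,field} set) = 2 ^ m"
  shows "(2::'a) = 0"
proof -
  have "(2::'a) ^ m = 0" using of_nat_card_zero[where 'a='a] assms by (metis of_nat_numeral of_nat_power)
  then show ?thesis by simp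
qed

definition catv :: "nat \<Rightarrow> (nat \<Rightarrow> 'a::zero) \<Rightarrow> (nat \<Rightarrow> 'a) \<Rightarrow> nat \<Rightarrow> 'a" where
  "catv n a b = (\<lambda>i. if i < n then a i else if i < 2 * n then b (i - n) else 0)"

lemma uuv_eq: "uuv n C1 C2 = {catv n u (u + v) | u v. u \<in> C1 \<and> v \<in> C2}"
  unfolding uuv_def catv_def plus_fun_def by simp

lemma cat_vecs: "catv n a b \<in> vecs (2 * n)"
  by (simp add: catv_def vecs_def)

lemma cat_zero: "catv n 0 0 = 0"
  by (simp add: catv_def fun_eq_iff)

lemma cat_inj:
  assumes "a \<in> vecs n" "a' \<in> vecs n" "b \<in> vecs n" "b' \<in> vecs n" "catv n a b = catv n a' b'"
  shows "a = a'" "b = b'"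
proof -
  show "a = a'"
  proof
    fix i show "a i = a' i"
    proof (cases "i < n")
      case True then show ?thesis using fun_cong[OF assms(5), of i] by (simp add: catv_def)
    next
      case False then show ?thesis using assms(1,2) by (simp add: vecs_def)
    qed
  qed
  show "b = b'"
  proof
    fix i show "b i = b' i"
    proof (cases "i < n")
      case True then show ?thesis using fun_cong[OF assms(5), of "i + n"] by (simp add: catv_def)
    next
      case False then show ?thesis using assms(3,4) by (simp add: vecs_def)
    qed
  qed
qed

lemma vecs2_cat:
  assumes "w \<in> vecs (2 * n)"
  obtains a b where "a \<in> vecs n" "b \<in> vecs n" "w = catv n a b"
proof -
  let ?a = "\<lambda>i. if i < n then w i else 0"
  let ?b = "\<lambda>i. if i < n then w (i + n) else 0"
  have "w = catv n ?a ?b" using assms by (auto simp: catv_def vecs_def fun_eq_iff)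
  moreover have "?a \<in> vecs n" "?b \<in> vecs n" by (auto simp: vecs_def)
  ultimately show thesis using that by blast
qed

lemma sum_split2: fixes n :: nat shows "(\<Sum>i<2*n. g i) = (\<Sum>i<n. g i) + (\<Sum>i<n. g (i + n))"
proof -
  have "(\<Sum>i<2*n. g i) = (\<Sum>i\<in>{0..<n}. g i) + (\<Sum>i\<in>{n..<n+n}. g i)"
    by (simp add: sum.atLeastLessThan_concat lessThan_atLeast0 mult_2)
  also have "(\<Sum>i\<in>{n..<n+n}. g i) = (\<Sum>i\<in>{0..<n}. g (i + n))"
    using sum.shift_bounds_nat_ivl[of g 0 n n] by simp
  finally show ?thesis by (simp add: lessThan_atLeast0)
qed

lemma ip_cat: "ipc s (2 * n) (catv n a b) (catv n a' b') = ipc s n a a' + ipc s n b b'"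
  unfolding ipc_def sum_split2 by (simp add: catv_def)



theorem corollary3:
  fixes C1 C2 :: "(nat \<Rightarrow> 'a::{finite,field}) set"
    and n :: nat and k :: inner_kind
  assumes "linear_code n C1" and "linear_code n C2"
    and "admissible_kind k TYPE('a)"
    and "(\<exists>m. card (UNIV :: 'a set) = 2 ^ m) \<and> self_orthogonal k n C2
         \<or> self_orthogonal k n C1 \<and> self_orthogonal k n C2"
  shows "(self_orthogonal k (2 * n) (uuv n C1 C2) \<longleftrightarrow> C1 \<subseteq> dual k n C2)
       \<and> (C1 \<subseteq> dual k n C2 \<longleftrightarrow> C2 \<subseteq> dual k n C1)
       \<and> (LCD k (2 * n) (uuv n C1 C2) \<longleftrightarrow>
            2 * int (code_dim (C1 \<inter> dual k n C2)) = int (code_dim C1) - int (code_dim C2))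
       \<and> (self_dual k (2 * n) (uuv n C1 C2) \<longleftrightarrow> C1 = dual k n C2)
       \<and> (C1 = dual k n C2 \<longleftrightarrow> C2 = dual k n C1)"
proof -
  define s where "s = (conjk k :: 'a \<Rightarrow> 'a)"
  interpret sesq s unfolding s_def by (rule sesq_conjk[OF assms(3)])
  have C1: "fv.subspace C1" "C1 \<subseteq> vecs n" using assms(1) by (auto simp: linear_code_eq)
  have C2: "fv.subspace C2" "C2 \<subseteq> vecs n" using assms(2) by (auto simp: linear_code_eq)
  have so2: "C2 \<subseteq> dualc s n C2" using assms(4) by (auto simp: self_orthogonal_def dual_eq s_def)
  have alt: "(2::'a) = 0 \<or> C1 \<subseteq> dualc s n C1"
    using assms(4) char2 by (auto simp: self_orthogonal_def dual_eq s_def)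
  have z1: "(0::nat\<Rightarrow>'a) \<in> C1" using fv.subspace_0[OF C1(1)] .
  have z2: "(0::nat\<Rightarrow>'a) \<in> C2" using fv.subspace_0[OF C2(1)] .
  have zd: "(0::nat\<Rightarrow>'a) \<in> dualc s n A" for A using fv.subspace_0[OF dual_subspace] .
  have zv: "(0::nat\<Rightarrow>'a) \<in> vecs n" using fv.subspace_0[OF vecs_subspace] .
  define X where "X = uuv n C1 C2"
  have X: "X = {catv n u (u + v) | u v. u \<in> C1 \<and> v \<in> C2}" by (simp add: X_def uuv_eq)
  have uv_vecs: "u + v \<in> vecs n" if "u \<in> C1" "v \<in> C2" for u v
    using fv.subspace_add[OF vecs_subspace] C1 C2 that by blast
  have IP: "ipc s (2*n) (catv n u (u+v)) (catv n u' (u'+v')) = ipc s n u v' + ipc s n v u'"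
    if uv: "u \<in> C1" "u' \<in> C1" "v \<in> C2" "v' \<in> C2" for u u' v v'
  proof -
    have vv: "ipc s n v v' = 0" using so2 uv by (auto simp: dualc_def)
    have uu: "ipc s n u u' + ipc s n u u' = 0"
    proof (cases "(2::'a) = 0")
      case True
      then show ?thesis by (metis mult_2 mult_zero_left)
    next
      case False
      then have "ipc s n u u' = 0" using alt uv by (auto simp: dualc_def)
      then show ?thesis by simp
    qed
    have "ipc s (2*n) (catv n u (u+v)) (catv n u' (u'+v')) = ipc s n u u' + ipc s n (u+v) (u'+v')"
      by (rule ip_cat)
    also have "\<dots> = (ipc s n u u' + ipc s n u u') + ipc s n u v' + ipc s n v u' + ipc s n v v'"
      by (simp add: ip_add_l ip_add_r algebra_simps)
    finally show ?thesis using uu vv by simp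
  qed
  have DX: "catv n u (u+v) \<in> dualc s (2*n) X \<longleftrightarrow> u \<in> dualc s n C2 \<and> v \<in> dualc s n C1"
    if uv: "u \<in> C1" "v \<in> C2" for u v
  proof
    assume h: "catv n u (u+v) \<in> dualc s (2*n) X"
    have "ipc s n u v' = 0" if v': "v' \<in> C2" for v'
    proof -
      have "catv n 0 (0 + v') \<in> X" using X v' z1 by blast
      then have "ipc s (2*n) (catv n u (u+v)) (catv n 0 (0+v')) = 0" using h by (auto simp: dualc_def)
      then show ?thesis using IP[of u 0 v v'] uv v' z1 by simp
    qed
    moreover have "ipc s n v u' = 0" if u': "u' \<in> C1" for u'
    proof -
      have "catv n u' (u' + 0) \<in> X" using X u' z2 by blast
      then have "ipc s (2*n) (catv n u (u+v)) (catv n u' (u'+0)) = 0" using h by (auto simp: dualc_def)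
      then show ?thesis using IP[of u u' v 0] uv u' z2 by simp
    qed
    ultimately show "u \<in> dualc s n C2 \<and> v \<in> dualc s n C1"
      using C1 C2 uv by (auto simp: dualc_def)
  next
    assume h: "u \<in> dualc s n C2 \<and> v \<in> dualc s n C1"
    show "catv n u (u+v) \<in> dualc s (2*n) X"
      unfolding dualc_def
    proof (intro CollectI conjI ballI)
      show "catv n u (u+v) \<in> vecs (2*n)" by (rule cat_vecs)
      fix w assume "w \<in> X"
      then obtain u' v' where w: "w = catv n u' (u'+v')" "u' \<in> C1" "v' \<in> C2" using X by blast
      then show "ipc s (2*n) (catv n u (u+v)) w = 0"
        using IP[of u u' v v'] uv h by (auto simp: dualc_def)
    qed
  qed
  have P1: "X \<subseteq> dualc s (2*n) X \<longleftrightarrow> C1 \<subseteq> dualc s n C2"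
  proof
    assume h: "X \<subseteq> dualc s (2*n) X"
    show "C1 \<subseteq> dualc s n C2"
    proof
      fix u assume u: "u \<in> C1"
      have "catv n u (u + 0) \<in> X" using X u z2 by blast
      then have "catv n u (u+0) \<in> dualc s (2*n) X" using h by blast
      then show "u \<in> dualc s n C2" using DX[OF u z2] by blast
    qed
  next
    assume h: "C1 \<subseteq> dualc s n C2"
    then have h2: "C2 \<subseteq> dualc s n C1" using orth_sym C1(2) C2(2) by blast
    show "X \<subseteq> dualc s (2*n) X"
    proof
      fix w assume "w \<in> X"
      then obtain u v where "w = catv n u (u+v)" "u \<in> C1" "v \<in> C2" using X by blast
      then show "w \<in> dualc s (2*n) X" using DX h h2 by blast
    qed
  qed
  have P1b: "C1 \<subseteq> dualc s n C2 \<longleftrightarrow> C2 \<subseteq> dualc s n C1" using orth_sym C1(2) C2(2) by blast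
  have hull: "X \<inter> dualc s (2*n) X = {0} \<longleftrightarrow> (C1 \<inter> dualc s n C2 = {0} \<and> C2 \<inter> dualc s n C1 = {0})"
  proof
    assume h: "X \<inter> dualc s (2*n) X = {0}"
    have y1: "u = 0" if u: "u \<in> C1 \<inter> dualc s n C2" for u
    proof -
      have "catv n u (u+0) \<in> X" using X u z2 by blast
      moreover have "catv n u (u+0) \<in> dualc s (2*n) X" using DX[of u 0] u z2 zd by blast
      ultimately have "catv n u (u+0) \<in> X \<inter> dualc s (2*n) X" by blast
      then have "catv n u (u+0) = 0" unfolding h by simp
      then have "catv n u u = catv n 0 0" by (simp add: cat_zero)
      moreover have "u \<in> vecs n" using u C1(2) by blast
      ultimately show "u = 0" using cat_inj(1)[of u n 0 u 0] zv by blast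
    qed
    have y2: "v = 0" if v: "v \<in> C2 \<inter> dualc s n C1" for v
    proof -
      have "catv n 0 (0+v) \<in> X" using X v z1 by blast
      moreover have "catv n 0 (0+v) \<in> dualc s (2*n) X" using DX[of 0 v] v z1 zd by blast
      ultimately have "catv n 0 (0+v) \<in> X \<inter> dualc s (2*n) X" by blast
      then have "catv n 0 (0+v) = 0" unfolding h by simp
      then have "catv n 0 v = catv n 0 0" by (simp add: cat_zero)
      moreover have "v \<in> vecs n" using v C2(2) by blast
      ultimately show "v = 0" using cat_inj(2)[of 0 n 0 v 0] zv by blast
    qed
    show "C1 \<inter> dualc s n C2 = {0} \<and> C2 \<inter> dualc s n C1 = {0}"
      using y1 y2 z1 z2 zd by blast
  next
    assume h: "C1 \<inter> dualc s n C2 = {0} \<and> C2 \<inter> dualc s n C1 = {0}"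
    show "X \<inter> dualc s (2*n) X = {0}"
    proof
      show "X \<inter> dualc s (2*n) X \<subseteq> {0}"
      proof
        fix w assume w: "w \<in> X \<inter> dualc s (2*n) X"
        then obtain u v where uv: "w = catv n u (u+v)" "u \<in> C1" "v \<in> C2" using X by blast
        then have "u \<in> dualc s n C2 \<and> v \<in> dualc s n C1" using DX w by blast
        then have "u \<in> C1 \<inter> dualc s n C2" "v \<in> C2 \<inter> dualc s n C1" using uv by blast+
        then have "u = 0" "v = 0" unfolding h[THEN conjunct1] h[THEN conjunct2] by simp_all
        then show "w \<in> {0}" using uv cat_zero by simp
      qed
      have "catv n 0 (0+0) \<in> X" using X z1 z2 by blast
      moreover have "catv n 0 (0+0) \<in> dualc s (2*n) X" using DX[of 0 0] z1 z2 zd by blast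
      ultimately show "{0} \<subseteq> X \<inter> dualc s (2*n) X" by (simp add: cat_zero)
    qed
  qed
  have I1: "fv.subspace (C1 \<inter> dualc s n C2)" "C1 \<inter> dualc s n C2 \<subseteq> vecs n"
    using fv.subspace_inter[OF C1(1) dual_subspace] C1(2) by auto
  have I2: "fv.subspace (C2 \<inter> dualc s n C1)" "C2 \<inter> dualc s n C1 \<subseteq> vecs n"
    using fv.subspace_inter[OF C2(1) dual_subspace] C2(2) by auto
  have d1: "fv.dim (C1 \<inter> dualc s n C2) = 0 \<longleftrightarrow> C1 \<inter> dualc s n C2 = {0}" by (rule dim_zero_iff[OF I1])
  have d2: "fv.dim (C2 \<inter> dualc s n C1) = 0 \<longleftrightarrow> C2 \<inter> dualc s n C1 = {0}" by (rule dim_zero_iff[OF I2])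
  have kd: "int (fv.dim (C1 \<inter> dualc s n C2)) - int (fv.dim (C2 \<inter> dualc s n C1))
         = int (fv.dim C1) - int (fv.dim C2)" by (rule key_dim[OF C1 C2])
  have P2: "X \<inter> dualc s (2*n) X = {0} \<longleftrightarrow>
      2 * int (fv.dim (C1 \<inter> dualc s n C2)) = int (fv.dim C1) - int (fv.dim C2)"
    unfolding hull d1[symmetric] d2[symmetric] using kd by arith
  have P3b: "C1 = dualc s n C2 \<longleftrightarrow> C2 = dualc s n C1"
    using dual_main(2)[OF C1] dual_main(2)[OF C2] by metis
  have P3: "X = dualc s (2*n) X \<longleftrightarrow> C1 = dualc s n C2"
  proof
    assume h: "X = dualc s (2*n) X"
    have sub: "C1 \<subseteq> dualc s n C2" using P1 h by blast
    have "dualc s n C2 \<subseteq> C1"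
    proof
      fix x assume x: "x \<in> dualc s n C2"
      have xv: "x \<in> vecs n" "-x \<in> vecs n"
        using x dual_vecs fv.subspace_neg[OF vecs_subspace] by blast+
      have "catv n x (-x) \<in> dualc s (2*n) X"
        unfolding dualc_def
      proof (intro CollectI conjI ballI)
        show "catv n x (-x) \<in> vecs (2*n)" by (rule cat_vecs)
        fix w assume "w \<in> X"
        then obtain u' v' where w: "w = catv n u' (u'+v')" "u' \<in> C1" "v' \<in> C2" using X by blast
        have "ipc s (2*n) (catv n x (-x)) w = ipc s n x u' + ipc s n (-x) (u'+v')"
          using w ip_cat by simp
        also have "\<dots> = - ipc s n x v'" by (simp add: ip_minus_l ip_add_r)
        also have "\<dots> = 0" using x w by (auto simp: dualc_def)
        finally show "ipc s (2*n) (catv n x (-x)) w = 0" .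
      qed
      then have "catv n x (-x) \<in> X" using h by simp
      then obtain u v where "catv n x (-x) = catv n u (u+v)" "u \<in> C1" "v \<in> C2" using X by blast
      then show "x \<in> C1" using cat_inj(1)[of x n u "-x" "u+v"] xv uv_vecs C1(2) by auto
    qed
    then show "C1 = dualc s n C2" using sub by blast
  next
    assume h: "C1 = dualc s n C2"
    have h2: "C2 = dualc s n C1" using P3b h by simp
    have "X \<subseteq> dualc s (2*n) X" using P1 h by blast
    moreover have "dualc s (2*n) X \<subseteq> X"
    proof
      fix w assume w: "w \<in> dualc s (2*n) X"
      then have "w \<in> vecs (2*n)" by (simp add: dualc_def)
      then obtain a b where ab: "a \<in> vecs n" "b \<in> vecs n" "w = catv n a b" by (rule vecs2_cat)
      have orth: "ipc s n a u' + ipc s n b (u' + v') = 0" if "u' \<in> C1" "v' \<in> C2" for u' v'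
      proof -
        have "catv n u' (u'+v') \<in> X" using X that by blast
        then have "ipc s (2*n) w (catv n u' (u'+v')) = 0" using w by (auto simp: dualc_def)
        then show ?thesis using ab(3) by (simp add: ip_cat)
      qed
      have "b \<in> dualc s n C2"
        unfolding dualc_def using ab(2) orth[OF z1] by simp
      then have bC1: "b \<in> C1" using h by simp
      have abv: "a + b \<in> vecs n" using fv.subspace_add[OF vecs_subspace ab(1,2)] .
      have "a + b \<in> dualc s n C1"
        unfolding dualc_def using abv orth[OF _ z2] by (simp add: ip_add_l)
      then have abC2: "a + b \<in> C2" using h2 by simp
      have abC1: "a + b \<in> C1" using so2 abC2 h by blast
      have aC1: "a \<in> C1" using fv.subspace_diff[OF C1(1) abC1 bC1] by simp
      have vC2: "b - a \<in> C2"
      proof (cases "(2::'a) = 0")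
        case True
        then have neg: "- (x::'a) = x" for x by (metis add_eq_0_iff mult_2 mult_zero_left)
        have eqba: "b - a = a + b"
        proof
          fix i
          have "b i - a i = b i + (- a i)" by (rule diff_conv_add_uminus)
          also have "\<dots> = a i + b i" using neg[of "a i"] by (simp only: add.commute)
          finally show "(b - a) i = (a + b) i" by simp
        qed
        show ?thesis unfolding eqba by (rule abC2)
      next
        case False
        then have "C1 \<subseteq> dualc s n C1" using alt by blast
        then have "C1 \<subseteq> C2" using h2 by simp
        then show ?thesis using fv.subspace_diff[OF C2(1)] bC1 aC1 by blast
      qed
      have "w = catv n a (a + (b - a))" using ab by simp
      then show "w \<in> X" using X aC1 vC2 by blast
    qed
    ultimately show "X = dualc s (2*n) X" by blast
  qed
  show ?thesis
    unfolding self_orthogonal_def self_dual_def LCD_def dual_eq code_dim_eq X_def[symmetric] s_def[symmetric]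
    using P1 P1b P2 P3 P3b by blast
qed

end
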